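(* Let $H(s)=\frac{B(s)}{A(s)}=K\,\frac{\prod_{i=1}^{m}(s-z_i)}{(s-p_1)(s-p_2)}$ be a real rational transfer function with $K\neq0$, denominator degree $n=2$, numerator degree $m\leq 2$, and no zero-pole cancellations. Then $H$ is externally positive if and only if $p_1,p_2\in\mathbb{R}$, $K>0$, $B(p^{\downarrow}_1)\geq 0$, $B'(p^{\downarrow}_1)\geq 0$ and $B(p^{\downarrow}_1)\geq B(p^{\downarrow}_2)$, where $B'$ is the derivative of the numerator polynomial $B$ and $p^{\downarrow}_1\geq p^{\downarrow}_2$ are the poles sorted in descending order.
   Context: A transfer function $H$ is externally positive if its inverse Laplace transform (impulse response) $h(t)=\mathfrak{L}^{-1}\{H(s)\}$ satisfies $h(t)\geq 0$ for all $t\in[0,+\infty)$ (when $m=n$, $h$ contains the term $K\delta(t)$ with $\delta(t)$ the Dirac impulse, which is required to have nonnegative weight). *)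

theory Defs
  imports "HOL-Complex_Analysis.Complex_Analysis" "HOL-Computational_Algebra.Polynomial"
begin

text \<open>Transfer function H(s) = B(s)/A(s) with real polynomials B, A (A nonzero).
  Complexified numerator and denominator.\<close>

definition cpoly :: "real poly \<Rightarrow> complex poly" where
  "cpoly P = map_poly complex_of_real P"

text \<open>Weight of the Dirac impulse in the impulse response: nonzero only when
  m = n, where it equals lim_{s -> infinity} H(s).\<close>

definition impulse_weight :: "real poly \<Rightarrow> real poly \<Rightarrow> real" where
  "impulse_weight B A = (if degree B = degree A then lead_coeff B / lead_coeff A else 0)"

text \<open>Regular (non-impulsive) part of the impulse response, i.e. the inverse Laplace
  transform of the strictly proper part of H, given by the residue (Bromwich) formula:
  h(t) = sum over the poles p of Res_{s=p} H(s) e^{st}.\<close>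

definition impulse_regular :: "real poly \<Rightarrow> real poly \<Rightarrow> real \<Rightarrow> complex" where
  "impulse_regular B A t =
     (\<Sum>p\<in>{z. poly (cpoly A) z = 0}.
        residue (\<lambda>s. poly (cpoly B) s / poly (cpoly A) s * exp (s * complex_of_real t)) p)"

definition externally_positive :: "real poly \<Rightarrow> real poly \<Rightarrow> bool" where
  "externally_positive B A \<longleftrightarrow>
     impulse_weight B A \<ge> 0 \<and>
     (\<forall>t::real. t \<ge> 0 \<longrightarrow> Im (impulse_regular B A t) = 0 \<and> Re (impulse_regular B A t) \<ge> 0)"

end

theory Submission
  imports Defs
begin

lemma res_simple:
  assumes "G holomorphic_on UNIV" "p1 \<noteq> p2"
  shows "residue (\<lambda>s. G s / ((s - p1) * (s - p2))) p1 = G p1 / (p1 - p2)"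
proof -
  have eq: "(\<lambda>s. G s / ((s - p1) * (s - p2))) = (\<lambda>s. (G s / (s - p2)) / (s - p1))"
    by (auto simp: fun_eq_iff)
  have "(\<lambda>s. G s / (s - p2)) holomorphic_on (- {p2})"
    by (intro holomorphic_intros holomorphic_on_subset[OF assms(1)]) auto
  then show ?thesis unfolding eq
    by (subst residue_simple[of "- {p2}"]) (use assms in auto)
qed

lemma res_double:
  assumes "G holomorphic_on UNIV"
  shows "residue (\<lambda>s. G s / ((s - p) * (s - p))) p = deriv G p"
proof -
  have eq: "(\<lambda>s. G s / ((s - p) * (s - p))) = (\<lambda>s. G s / (s - p) ^ Suc 1)"
    by (auto simp: fun_eq_iff power2_eq_square)
  show ?thesis unfolding eq
    by (subst residue_holomorphic_over_power[of UNIV]) (use assms in auto)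
qed

lemma B_expand:
  fixes B :: "real poly" assumes "degree B \<le> 2"
  shows "B = [:coeff B 0, coeff B 1, coeff B 2:]"
proof (rule poly_eqI)
  fix n show "coeff B n = coeff [:coeff B 0, coeff B 1, coeff B 2:] n"
    using assms coeff_eq_0[of B n]
    by (cases n; cases "n - 1"; cases "n - 2") (auto simp: coeff_pCons numeral_2_eq_2 split: nat.splits)
qed

lemma cpoly_B:
  fixes B :: "real poly" assumes "degree B \<le> 2"
  shows "poly (cpoly B) s = of_real (coeff B 0) + of_real (coeff B 1) * s + of_real (coeff B 2) * s^2"
proof -
  have "cpoly B = cpoly [:coeff B 0, coeff B 1, coeff B 2:]" using B_expand[OF assms] by simp
  then show ?thesis unfolding cpoly_def by (simp add: map_poly_pCons algebra_simps power2_eq_square)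
qed



lemma forall_exp_pos:
  fixes u v d :: real assumes "d > 0"
  shows "(\<forall>t\<ge>0. u * exp (d * t) - v \<ge> 0) \<longleftrightarrow> u \<ge> 0 \<and> u \<ge> v"
proof
  assume H: "\<forall>t\<ge>0. u * exp (d * t) - v \<ge> 0"
  have uv: "u \<ge> v" using H[rule_format, of 0] by simp
  moreover have "u \<ge> 0"
  proof (rule ccontr)
    assume "\<not> u \<ge> 0" hence u: "u < 0" by simp
    define r where "r = \<bar>v\<bar> / \<bar>u\<bar>"
    define t where "t = r / d"
    have r0: "r \<ge> 0" unfolding r_def by simp
    have t0: "t \<ge> 0" unfolding t_def using r0 assms by simp
    have "d * t = r" unfolding t_def using assms by simp
    hence "exp (d * t) \<ge> 1 + r" using exp_ge_add_one_self[of r] by simp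
    hence "u * exp (d * t) \<le> u * (1 + r)" using u by (intro mult_left_mono_neg) auto
    also have "\<dots> = u - \<bar>v\<bar>" unfolding r_def using u by (simp add: field_simps)
    finally have "u * exp (d * t) - v < 0" using u by linarith
    thus False using H t0 by force
  qed
  ultimately show "u \<ge> 0 \<and> u \<ge> v" by simp
next
  assume "u \<ge> 0 \<and> u \<ge> v"
  then show "\<forall>t\<ge>0. u * exp (d * t) - v \<ge> 0"
  proof (intro allI impI)
    fix t :: real assume "t \<ge> 0" "u \<ge> 0 \<and> u \<ge> v"
    hence "exp (d*t) \<ge> 1" using assms by simp
    hence "u * exp (d*t) \<ge> u * 1" using \<open>u \<ge> 0 \<and> u \<ge> v\<close> by (intro mult_left_mono) auto
    thus "u * exp (d * t) - v \<ge> 0" using \<open>u \<ge> 0 \<and> u \<ge> v\<close> by simp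
  qed
qed

lemma forall_lin_pos:
  fixes u v :: real
  shows "(\<forall>t\<ge>0. (u + t * v) * exp (q * t) \<ge> 0) \<longleftrightarrow> u \<ge> 0 \<and> v \<ge> 0"
proof
  assume H: "\<forall>t\<ge>0. (u + t * v) * exp (q * t) \<ge> 0"
  have H': "\<forall>t\<ge>0. u + t * v \<ge> 0"
    using H by (simp add: zero_le_mult_iff)
  have "u \<ge> 0" using H'[rule_format, of 0] by simp
  moreover have "v \<ge> 0"
  proof (rule ccontr)
    assume "\<not> v \<ge> 0"
    hence v: "v < 0" by simp
    define t where "t = (\<bar>u\<bar> + 1) / \<bar>v\<bar>"
    have "t \<ge> 0" unfolding t_def by simp
    have "t * v = - (\<bar>u\<bar> + 1)" unfolding t_def using v by (simp add: field_simps)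
    hence "u + t * v < 0" by linarith
    thus False using H' \<open>t \<ge> 0\<close> by force
  qed
  ultimately show "u \<ge> 0 \<and> v \<ge> 0" by simp
qed simp

lemma distinct_real:
  fixes b0 b1 b2 q1 q2 :: real
  assumes "q1 > q2" "b0 \<noteq> 0 \<or> b1 \<noteq> 0 \<or> b2 \<noteq> 0"
  defines "P \<equiv> \<lambda>x. b0 + b1 * x + b2 * x^2"
  defines "L \<equiv> (if b2 \<noteq> 0 then b2 else if b1 \<noteq> 0 then b1 else b0)"
  shows "((b2 \<noteq> 0 \<longrightarrow> b2 \<ge> 0) \<and> (\<forall>t\<ge>0. (P q1 * exp (q1 * t) - P q2 * exp (q2 * t)) / (q1 - q2) \<ge> 0))
     \<longleftrightarrow> (L > 0 \<and> P q1 \<ge> 0 \<and> b1 + 2 * b2 * q1 \<ge> 0 \<and> P q1 \<ge> P q2)"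
proof -
  have d: "q1 - q2 > 0" using assms by simp
  have eq: "\<And>t. (P q1 * exp (q1 * t) - P q2 * exp (q2 * t)) / (q1 - q2) =
     exp (q2 * t) / (q1 - q2) * (P q1 * exp ((q1 - q2) * t) - P q2)"
  proof -
    fix t
    have gen: "\<And>x y a b c::real. y / c * (a * x - b) = (a * (x * y) - b * y) / c"
      by (case_tac "c = 0") (simp_all add: field_simps)
    have e: "exp ((q1 - q2) * t) * exp (q2 * t) = exp (q1 * t)" by (simp add: exp_add[symmetric] algebra_simps)
    have "exp (q2 * t) / (q1 - q2) * (P q1 * exp ((q1 - q2) * t) - P q2) =
       (P q1 * (exp ((q1 - q2) * t) * exp (q2 * t)) - P q2 * exp (q2 * t)) / (q1 - q2)"
      using gen by blast
    then show "(P q1 * exp (q1 * t) - P q2 * exp (q2 * t)) / (q1 - q2) =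
     exp (q2 * t) / (q1 - q2) * (P q1 * exp ((q1 - q2) * t) - P q2)" unfolding e by (rule sym)
  qed
  have pos: "\<And>t. exp (q2 * t) / (q1 - q2) > 0" using d by simp
  have "(\<forall>t\<ge>0. (P q1 * exp (q1 * t) - P q2 * exp (q2 * t)) / (q1 - q2) \<ge> 0)
      \<longleftrightarrow> (\<forall>t\<ge>0. P q1 * exp ((q1 - q2) * t) - P q2 \<ge> 0)"
  proof -
    have "\<And>t. 0 \<le> exp (q2 * t) / (q1 - q2) * (P q1 * exp ((q1 - q2) * t) - P q2)
       \<longleftrightarrow> 0 \<le> P q1 * exp ((q1 - q2) * t) - P q2"
      using pos by (simp only: zero_le_mult_iff) (meson less_le_not_le)
    then show ?thesis unfolding eq by presburger
  qed
  also have "\<dots> \<longleftrightarrow> P q1 \<ge> 0 \<and> P q1 \<ge> P q2" by (rule forall_exp_pos[OF d])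
  finally have R: "(\<forall>t\<ge>0. (P q1 * exp (q1 * t) - P q2 * exp (q2 * t)) / (q1 - q2) \<ge> 0)
      \<longleftrightarrow> P q1 \<ge> 0 \<and> P q1 \<ge> P q2" .
  have diff: "P q1 - P q2 = (q1 - q2) * (b1 + b2 * (q1 + q2))"
    unfolding P_def by (simp add: algebra_simps power2_eq_square)
  have key: "P q1 \<ge> P q2 \<longleftrightarrow> b1 + b2 * (q1 + q2) \<ge> 0"
  proof -
    have "P q1 \<ge> P q2 \<longleftrightarrow> 0 \<le> (q1 - q2) * (b1 + b2 * (q1 + q2))"
      using diff by linarith
    also have "\<dots> \<longleftrightarrow> b1 + b2 * (q1 + q2) \<ge> 0" using d by (simp add: zero_le_mult_iff)
    finally show ?thesis .
  qed
  show ?thesis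
  proof (cases "b2 \<noteq> 0")
    case True
    have "b2 > 0 \<Longrightarrow> b1 + b2 * (q1 + q2) \<ge> 0 \<Longrightarrow> b1 + 2 * b2 * q1 \<ge> 0"
    proof -
      assume "b2 > 0" "b1 + b2 * (q1 + q2) \<ge> 0"
      moreover have "b2 * (q1 - q2) > 0" using \<open>b2 > 0\<close> d by simp
      moreover have "b1 + 2*b2*q1 = (b1 + b2*(q1+q2)) + b2*(q1-q2)" by (simp add: algebra_simps)
      ultimately show ?thesis by linarith
    qed
    moreover have "L = b2" using True unfolding L_def by simp
    ultimately show ?thesis unfolding R using True key by auto
  next
    case False
    hence b2: "b2 = 0" by simp
    show ?thesis
    proof (cases "b1 = 0")
      case True
      have "P q1 = b0" "P q2 = b0" "L = b0" unfolding P_def L_def using b2 True by simp_all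
      then show ?thesis unfolding R using b2 True assms(2) by auto
    next
      case False
      have "L = b1" unfolding L_def using b2 False by simp
      then show ?thesis unfolding R using key b2 False by auto
    qed
  qed
qed

lemma double_real:
  fixes b0 b1 b2 q :: real
  assumes "b0 \<noteq> 0 \<or> b1 \<noteq> 0 \<or> b2 \<noteq> 0"
  defines "P \<equiv> \<lambda>x. b0 + b1 * x + b2 * x^2"
  defines "L \<equiv> (if b2 \<noteq> 0 then b2 else if b1 \<noteq> 0 then b1 else b0)"
  shows "((b2 \<noteq> 0 \<longrightarrow> b2 \<ge> 0) \<and> (\<forall>t\<ge>0. ((b1 + 2 * b2 * q) + t * P q) * exp (q * t) \<ge> 0))
     \<longleftrightarrow> (L > 0 \<and> P q \<ge> 0 \<and> b1 + 2 * b2 * q \<ge> 0 \<and> P q \<ge> P q)"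
  unfolding forall_lin_pos using assms(1) unfolding L_def P_def by auto



lemma Re_h:
  fixes w q :: complex assumes "Im q \<noteq> 0"
  shows "Re (w / (q - cnj q) + cnj w / (cnj q - q)) = Im w / Im q"
proof -
  have "cnj w / (cnj q - q) = - (cnj w / (q - cnj q))" by (metis minus_diff_eq divide_minus_right)
  then have "w / (q - cnj q) + cnj w / (cnj q - q) = (w - cnj w) / (q - cnj q)"
    by (simp add: diff_divide_distrib)
  also have "\<dots> = (complex_of_real (2 * Im w) * \<i>) / (complex_of_real (2 * Im q) * \<i>)"
    by (simp only: complex_diff_cnj)
  also have "\<dots> = complex_of_real (Im w / Im q)" using assms by (simp add: field_simps)
  finally show ?thesis by simp
qed

lemma Im_w:
  fixes c :: complex and a b t :: real
  shows "Im (c * exp (Complex a b * complex_of_real t)) = exp (a * t) * (Re c * sin (b * t) + Im c * cos (b * t))"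
  by (simp add: Re_exp Im_exp algebra_simps)

lemma osc:
  fixes c :: complex and a b :: real assumes "b > 0" "c \<noteq> 0"
  shows "\<exists>t\<ge>0. Im (c * exp (Complex a b * complex_of_real t)) / b < 0"
proof -
  have iff: "Im (c * exp (Complex a b * complex_of_real t)) / b < 0 \<longleftrightarrow> Re c * sin (b * t) + Im c * cos (b * t) < 0" for t
    unfolding Im_w using assms(1) by (simp add: divide_less_0_iff mult_less_0_iff)
  have "\<exists>t\<ge>0. Re c * sin (b * t) + Im c * cos (b * t) < 0"
  proof (cases "Re c = 0")
    case True
    then have "Im c \<noteq> 0" using assms(2) complex_eq_iff by force
    show ?thesis
    proof (cases "Im c < 0")
      case True thus ?thesis by (intro exI[of _ 0]) simp
    next
      case False
      hence "Im c > 0" using \<open>Im c \<noteq> 0\<close> by simp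
      show ?thesis using \<open>Re c = 0\<close> \<open>Im c > 0\<close> assms(1)
        by (intro exI[of _ "pi / b"]) simp
    qed
  next
    case False
    show ?thesis
    proof (cases "Re c < 0")
      case True thus ?thesis using assms(1) by (intro exI[of _ "pi / 2 / b"]) simp
    next
      case F: False
      hence "Re c > 0" using False by simp
      have "sin (3 * pi / 2) = -1" "cos (3 * pi / 2) = 0"
        using sin_periodic_pi[of "pi/2"] cos_periodic_pi[of "pi/2"] by (simp_all add: field_simps)
      thus ?thesis using \<open>Re c > 0\<close> assms(1) by (intro exI[of _ "3 * pi / 2 / b"]) simp
    qed
  qed
  then show ?thesis using iff by blast
qed


theorem proposition6:
  fixes B A :: "real poly" and p1 p2 :: complex
  assumes "B \<noteq> 0"
    and "degree B \<le> 2"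
    and "cpoly A = [:-p1, 1:] * [:-p2, 1:]"
    and "\<forall>z. poly (cpoly A) z = 0 \<longrightarrow> poly (cpoly B) z \<noteq> 0"
  shows "externally_positive B A \<longleftrightarrow>
    (p1 \<in> \<real> \<and> p2 \<in> \<real> \<and> lead_coeff B > 0 \<and>
     (let q1 = max (Re p1) (Re p2); q2 = min (Re p1) (Re p2) in
        poly B q1 \<ge> 0 \<and> poly (pderiv B) q1 \<ge> 0 \<and> poly B q1 \<ge> poly B q2))"
proof -
  define b0 where "b0 = coeff B 0"
  define b1 where "b1 = coeff B 1"
  define b2 where "b2 = coeff B 2"
  define L where "L = (if b2 \<noteq> 0 then b2 else if b1 \<noteq> 0 then b1 else b0)"
  have Bexp: "B = [:b0, b1, b2:]" unfolding b0_def b1_def b2_def by (rule B_expand[OF assms(2)])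
  have Bc: "poly (cpoly B) s = of_real b0 + of_real b1 * s + of_real b2 * s^2" for s
    unfolding b0_def b1_def b2_def by (rule cpoly_B[OF assms(2)])
  have nz: "b0 \<noteq> 0 \<or> b1 \<noteq> 0 \<or> b2 \<noteq> 0" using Bexp assms(1) by auto
  have PB: "poly B x = b0 + b1 * x + b2 * x^2" for x
    by (subst Bexp) (simp add: algebra_simps power2_eq_square)
  have DB: "poly (pderiv B) x = b1 + 2 * b2 * x" for x
    by (subst Bexp) (simp add: pderiv_pCons algebra_simps)
  have deg2: "degree B = 2 \<longleftrightarrow> b2 \<noteq> 0"
  proof
    assume "degree B = 2" thus "b2 \<noteq> 0" using assms(1) unfolding b2_def by (metis leading_coeff_0_iff)
  next
    assume "b2 \<noteq> 0" thus "degree B = 2" using assms(2) unfolding b2_def by (meson le_antisym le_degree)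
  qed
  have leadB: "lead_coeff B = L"
  proof -
    consider "degree B = 2" | "degree B = 1" | "degree B = 0" using assms(2) by linarith
    then show ?thesis
    proof cases
      case 1 thus ?thesis using deg2 unfolding L_def b2_def by simp
    next
      case 2
      have "b2 = 0" unfolding b2_def using 2 by (simp add: coeff_eq_0)
      moreover have "b1 \<noteq> 0" unfolding b1_def using 2 assms(1) by (metis leading_coeff_0_iff)
      ultimately show ?thesis using 2 unfolding L_def b1_def by simp
    next
      case 3
      have "b2 = 0" "b1 = 0" unfolding b2_def b1_def using 3 by (simp_all add: coeff_eq_0)
      thus ?thesis using 3 unfolding L_def b0_def by simp
    qed
  qed
  have cA: "poly (cpoly A) s = (s - p1) * (s - p2)" for s using assms(3) by (simp add: algebra_simps)
  have coeffA: "coeff (cpoly A) n = of_real (coeff A n)" for n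
    unfolding cpoly_def by (simp add: coeff_map_poly)
  have "degree (cpoly A) = 2" using assms(3) by simp
  hence degA: "degree A = 2" unfolding cpoly_def by (simp add: degree_map_poly)
  have "coeff (cpoly A) 2 = 1" using assms(3) by (simp add: numeral_2_eq_2)
  hence leadA2: "coeff A 2 = 1" using coeffA[of 2] by simp
  hence leadA: "lead_coeff A = 1" using degA by simp
  have Wt: "impulse_weight B A = (if b2 \<noteq> 0 then b2 else 0)"
    unfolding impulse_weight_def degA leadA leadA2 using deg2 leadB unfolding L_def by auto
  have Wiff: "impulse_weight B A \<ge> 0 \<longleftrightarrow> (b2 \<noteq> 0 \<longrightarrow> b2 \<ge> 0)" unfolding Wt by auto
  have roots: "{z. poly (cpoly A) z = 0} = {p1, p2}" unfolding cA by auto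
  define G where "G t s = poly (cpoly B) s * exp (s * complex_of_real t)" for t s
  have Gholo: "G t holomorphic_on UNIV" for t
    unfolding G_def Bc by (intro holomorphic_intros)
  have fn: "(\<lambda>s. poly (cpoly B) s / poly (cpoly A) s * exp (s * complex_of_real t)) =
      (\<lambda>s. G t s / ((s - p1) * (s - p2)))" for t
    unfolding cA G_def by (auto simp: fun_eq_iff)
  have hd: "impulse_regular B A t = G t p1 / (p1 - p2) + G t p2 / (p2 - p1)" if "p1 \<noteq> p2" for t
  proof -
    have fn2: "(\<lambda>s. G t s / ((s - p1) * (s - p2))) = (\<lambda>s. G t s / ((s - p2) * (s - p1)))"
      by (simp add: mult.commute)
    have "impulse_regular B A t = residue (\<lambda>s. G t s / ((s - p1) * (s - p2))) p1
          + residue (\<lambda>s. G t s / ((s - p1) * (s - p2))) p2"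
      unfolding impulse_regular_def roots fn using that by simp
    also have "\<dots> = G t p1 / (p1 - p2) + G t p2 / (p2 - p1)"
    proof -
      have "residue (\<lambda>s. G t s / ((s - p1) * (s - p2))) p2 = G t p2 / (p2 - p1)"
        unfolding fn2 using res_simple[OF Gholo, of p2 p1] that by auto
      then show ?thesis using res_simple[OF Gholo that] by simp
    qed
    finally show ?thesis .
  qed
  have hdbl: "impulse_regular B A t = deriv (G t) p1" if "p1 = p2" for t
    unfolding impulse_regular_def roots fn using that res_double[OF Gholo] by simp
  have dG: "deriv (G t) p = (of_real b1 + 2 * of_real b2 * p + of_real t * poly (cpoly B) p) * exp (p * of_real t)" for t p
  proof -
    have "(G t has_field_derivative (of_real b1 + 2 * of_real b2 * p + of_real t * poly (cpoly B) p) * exp (p * of_real t)) (at p)"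
      unfolding G_def Bc
      by (auto intro!: derivative_eq_intros simp: algebra_simps power2_eq_square)
    thus ?thesis by (rule DERIV_imp_deriv)
  qed
  have "coeff (cpoly A) 1 = - (p1 + p2)" "coeff (cpoly A) 0 = p1 * p2" using assms(3) by simp_all
  hence e1: "-(p1 + p2) = of_real (coeff A 1)" and e0: "p1 * p2 = of_real (coeff A 0)"
    using coeffA[of 1] coeffA[of 0] by simp_all
  have sR: "Im (p1 + p2) = 0" "Im (p1 * p2) = 0"
    using arg_cong[OF e1, of Im] arg_cong[OF e0, of Im] by simp_all
  have real_or_cnj: "(Im p1 = 0 \<and> Im p2 = 0) \<or> (Im p1 \<noteq> 0 \<and> p2 = cnj p1)"
  proof (cases "Im p1 = 0")
    case True thus ?thesis using sR by simp
  next
    case False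
    have i2: "Im p2 = - Im p1" using sR by simp
    have "Im p1 * (Re p2 - Re p1) = 0" using sR(2) i2 by (simp add: algebra_simps)
    hence "Re p2 = Re p1" using False by simp
    thus ?thesis using False i2 by (simp add: complex_eq_iff)
  qed
  show ?thesis
  proof (cases "Im p1 = 0 \<and> Im p2 = 0")
    case False
    then have np: "Im p1 \<noteq> 0" "p2 = cnj p1" using real_or_cnj by auto
    have RHS: "\<not> p1 \<in> \<real>" using np complex_is_Real_iff by blast
    define q where "q = (if Im p1 > 0 then p1 else p2)"
    have qpos: "Im q > 0" using np unfolding q_def by auto
    have pq: "{p1, p2} = {q, cnj q}" using np unfolding q_def by auto
    have ne: "p1 \<noteq> p2" using np by (auto simp: complex_eq_iff)
    have hq: "impulse_regular B A t = G t q / (q - cnj q) + G t (cnj q) / (cnj q - q)" for t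
      using hd[OF ne, of t] np unfolding q_def by auto
    have Gc: "G t (cnj q) = cnj (G t q)" for t
      unfolding G_def Bc by (simp add: exp_cnj)
    have c0: "poly (cpoly B) q \<noteq> 0" using assms(4) cA unfolding q_def by auto
    have Gq: "G t q = poly (cpoly B) q * exp (Complex (Re q) (Im q) * complex_of_real t)" for t
      unfolding G_def by simp
    obtain t where t: "t \<ge> 0" "Im (poly (cpoly B) q * exp (Complex (Re q) (Im q) * complex_of_real t)) / Im q < 0"
      using osc[OF qpos c0] by blast
    have "Re (impulse_regular B A t) < 0"
      unfolding hq Gc using Re_h[of q "G t q"] qpos t unfolding Gq by simp
    hence "\<not> externally_positive B A" unfolding externally_positive_def using t by force
    thus ?thesis using RHS by simp
  next
    case True
    define x1 where "x1 = Re p1"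
    define x2 where "x2 = Re p2"
    have p1r: "p1 = of_real x1" and p2r: "p2 = of_real x2" using True unfolding x1_def x2_def
      by (simp_all add: complex_eq_iff)
    have Greal: "G t (of_real x) = of_real (poly B x * exp (x * t))" for t x
      unfolding G_def Bc PB by (simp add: exp_of_real[symmetric])
    have EP: "externally_positive B A \<longleftrightarrow> (b2 \<noteq> 0 \<longrightarrow> b2 \<ge> 0) \<and> (\<forall>t\<ge>0. Re (impulse_regular B A t) \<ge> 0)"
      if "\<And>t. Im (impulse_regular B A t) = 0"
      unfolding externally_positive_def Wiff using that by auto
    have Rl: "p1 \<in> \<real>" "p2 \<in> \<real>" using True complex_is_Real_iff by auto
    show ?thesis
    proof (cases "x1 = x2")
      case False
      have hr: "impulse_regular B A t = of_real ((poly B x1 * exp (x1 * t) - poly B x2 * exp (x2 * t)) / (x1 - x2))" for t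
      proof -
        have ne: "p1 \<noteq> p2" using False p1r p2r by simp
        have "impulse_regular B A t = of_real (poly B x1 * exp (x1 * t)) / of_real (x1 - x2)
            + of_real (poly B x2 * exp (x2 * t)) / of_real (x2 - x1)"
          unfolding hd[OF ne] p1r p2r Greal by simp
        also have "\<dots> = of_real (poly B x1 * exp (x1 * t) / (x1 - x2) + poly B x2 * exp (x2 * t) / (x2 - x1))"
          by simp
        also have "poly B x2 * exp (x2 * t) / (x2 - x1) = - (poly B x2 * exp (x2 * t) / (x1 - x2))"
          by (metis minus_diff_eq divide_minus_right)
        also have "poly B x1 * exp (x1 * t) / (x1 - x2) + - (poly B x2 * exp (x2 * t) / (x1 - x2))
           = (poly B x1 * exp (x1 * t) - poly B x2 * exp (x2 * t)) / (x1 - x2)"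
          by (simp add: diff_divide_distrib)
        finally show ?thesis .
      qed
      have EP2: "externally_positive B A \<longleftrightarrow> (b2 \<noteq> 0 \<longrightarrow> b2 \<ge> 0) \<and>
         (\<forall>t\<ge>0. (poly B x1 * exp (x1 * t) - poly B x2 * exp (x2 * t)) / (x1 - x2) \<ge> 0)"
        using EP hr by simp
      show ?thesis
      proof (cases "x1 > x2")
        case True
        have mm: "max (Re p1) (Re p2) = x1" "min (Re p1) (Re p2) = x2" using True unfolding x1_def x2_def by auto
        show ?thesis unfolding EP2 mm Let_def leadB using distinct_real[OF True nz] Rl
          unfolding PB DB L_def by simp
      next
        case F: False
        hence lt: "x2 > x1" using False by simp
        have mm: "max (Re p1) (Re p2) = x2" "min (Re p1) (Re p2) = x1" using lt unfolding x1_def x2_def by auto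
        have sw: "(poly B x1 * exp (x1 * t) - poly B x2 * exp (x2 * t)) / (x1 - x2) =
                  (poly B x2 * exp (x2 * t) - poly B x1 * exp (x1 * t)) / (x2 - x1)" for t
          by (metis minus_diff_eq minus_divide_divide)
        show ?thesis unfolding EP2 mm Let_def leadB sw using distinct_real[OF lt nz] Rl
          unfolding PB DB L_def by simp
      qed
    next
      case True
      have eq: "p1 = p2" using True p1r p2r by simp
      have hr: "impulse_regular B A t = of_real ((b1 + 2 * b2 * x1 + t * poly B x1) * exp (x1 * t))" for t
        unfolding hdbl[OF eq] dG p1r Bc PB by (simp add: exp_of_real[symmetric])
      have mm: "max (Re p1) (Re p2) = x1" "min (Re p1) (Re p2) = x1" using True unfolding x1_def x2_def by auto
      have EP2: "externally_positive B A \<longleftrightarrow> (b2 \<noteq> 0 \<longrightarrow> b2 \<ge> 0) \<and>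
         (\<forall>t\<ge>0. ((b1 + 2 * b2 * x1) + t * poly B x1) * exp (x1 * t) \<ge> 0)"
        using EP hr by simp
      show ?thesis unfolding EP2 mm Let_def leadB using double_real[OF nz, of x1] Rl
          unfolding PB DB L_def by simp
    qed
  qed
qed

end
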